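(* Fix $k\ge0$. Let $\mathcal G$ be a discrete groupoid acting self-similarly on a locally convex $(k+1)$-graph $\Lambda$, and let $\Gamma=d^{-1}(\mathbb N^k\times\{0\})$. Then every finite subset $F\subseteq v(\Gamma\bowtie\mathcal G)$ ($v\in\Lambda^0$) that is exhaustive in $\Gamma\bowtie\mathcal G$ is exhaustive in $\Lambda\bowtie\mathcal G$.
   Context: A $(k+1)$-graph is a countable small category $\Lambda$ with a functor $d:\Lambda\to\mathbb N^{k+1}$ with unique factorisation (whenever $d(\lambda)=m+n$ there are unique $\mu,\nu$ with $\lambda=\mu\nu$, $d(\mu)=m$, $d(\nu)=n$); $\Lambda^n=d^{-1}(n)$. Locally convex: for $i\ne j$, if $e\in\Lambda^{e_i}$ and $r(e)\Lambda^{e_j}\ne\emptyset$ then $s(e)\Lambda^{e_j}\ne\emptyset$. A self-similar action of a discrete groupoid $\mathcal G$ ($\mathcal G^0=\Lambda^0$) on $\Lambda$: left action $g\triangleright\lambda\in\Lambda$, right action $g\triangleleft\lambda\in\mathcal G$ (for $s(g)=r(\lambda)$) with $s(g\triangleright\lambda)=r(g\triangleleft\lambda)$, $g\triangleright(\lambda\mu)=(g\triangleright\lambda)((g\triangleleft\lambda)\triangleright\mu)$, $(gh)\triangleleft\lambda=(g\triangleleft(h\triangleright\lambda))(h\triangleleft\lambda)$, $d(g\triangleright\lambda)=d(\lambda)$. $\Lambda\bowtie\mathcal G$ has morphisms $\lambda g$ ($s(\lambda)=r(g)$), product $\lambda g\mu h=\lambda(g\triangleright\mu)(g\triangleleft\mu)h$;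 $\Gamma\bowtie\mathcal G$ is a subcategory. For a category $\mathcal C$ and $v\in\mathcal C^0$, $F\subseteq v\mathcal C$ is exhaustive in $\mathcal C$ if for every $c\in v\mathcal C$ there is $a\in F$ with $c\mathcal C\cap a\mathcal C\ne\emptyset$. *)

theory Defs
  imports Main "HOL-Library.Countable_Set"
begin

text \<open>A small category whose objects are represented by identity morphisms,
  equipped with a degree functor into N^n (functions nat => nat vanishing at indices >= n).\<close>

record 'a kgraph =
  KMor :: "'a set"
  KSrc :: "'a \<Rightarrow> 'a"
  KRng :: "'a \<Rightarrow> 'a"
  KCmp :: "'a \<Rightarrow> 'a \<Rightarrow> 'a"
  KDeg :: "'a \<Rightarrow> nat \<Rightarrow> nat"

definition vertices :: "'a kgraph \<Rightarrow> 'a set" where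
  "vertices L = KRng L ` KMor L"

definition is_category :: "'a kgraph \<Rightarrow> bool" where
  "is_category L \<longleftrightarrow>
     (\<forall>x\<in>KMor L. KSrc L x \<in> KMor L \<and> KRng L x \<in> KMor L
        \<and> KSrc L (KSrc L x) = KSrc L x \<and> KRng L (KSrc L x) = KSrc L x
        \<and> KSrc L (KRng L x) = KRng L x \<and> KRng L (KRng L x) = KRng L x
        \<and> KCmp L (KRng L x) x = x \<and> KCmp L x (KSrc L x) = x)
   \<and> (\<forall>x\<in>KMor L. \<forall>y\<in>KMor L. KSrc L x = KRng L y \<longrightarrow>
        KCmp L x y \<in> KMor L \<and> KRng L (KCmp L x y) = KRng L x \<and> KSrc L (KCmp L x y) = KSrc L y)
   \<and> (\<forall>x\<in>KMor L. \<forall>y\<in>KMor L. \<forall>z\<in>KMor L. KSrc L x = KRng L y \<longrightarrow> KSrc L y = KRng L z \<longrightarrow>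
        KCmp L (KCmp L x y) z = KCmp L x (KCmp L y z))"

text \<open>An n-graph (n = k+1 in the paper): countable small category with a degree functor
  d into N^n having the unique factorisation property.\<close>

definition is_kgraph :: "nat \<Rightarrow> 'a kgraph \<Rightarrow> bool" where
  "is_kgraph n L \<longleftrightarrow> is_category L \<and> countable (KMor L)
   \<and> (\<forall>x\<in>KMor L. \<forall>i\<ge>n. KDeg L x i = 0)
   \<and> (\<forall>v\<in>vertices L. KDeg L v = (\<lambda>_. 0))
   \<and> (\<forall>x\<in>KMor L. \<forall>y\<in>KMor L. KSrc L x = KRng L y \<longrightarrow>
        KDeg L (KCmp L x y) = (\<lambda>i. KDeg L x i + KDeg L y i))
   \<and> (\<forall>x\<in>KMor L. \<forall>m p. KDeg L x = (\<lambda>i. m i + p i) \<longrightarrow>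
        (\<exists>!q. case q of (a, b) \<Rightarrow> a \<in> KMor L \<and> b \<in> KMor L \<and> KSrc L a = KRng L b
                 \<and> KCmp L a b = x \<and> KDeg L a = m \<and> KDeg L b = p))"

definition unitv :: "nat \<Rightarrow> nat \<Rightarrow> nat" where
  "unitv i = (\<lambda>j. if j = i then 1 else 0)"

definition locally_convex :: "nat \<Rightarrow> 'a kgraph \<Rightarrow> bool" where
  "locally_convex n L \<longleftrightarrow>
    (\<forall>i<n. \<forall>j<n. i \<noteq> j \<longrightarrow> (\<forall>e\<in>KMor L. KDeg L e = unitv i \<longrightarrow>
       (\<exists>f\<in>KMor L. KRng L f = KRng L e \<and> KDeg L f = unitv j) \<longrightarrow>
       (\<exists>f\<in>KMor L. KRng L f = KSrc L e \<and> KDeg L f = unitv j)))"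

text \<open>A (discrete) groupoid whose unit space is identified with the set V:
  the unit at v is GId v.\<close>

record ('g, 'a) groupoid =
  GMor :: "'g set"
  GSrc :: "'g \<Rightarrow> 'a"
  GRng :: "'g \<Rightarrow> 'a"
  GCmp :: "'g \<Rightarrow> 'g \<Rightarrow> 'g"
  GId  :: "'a \<Rightarrow> 'g"
  GInv :: "'g \<Rightarrow> 'g"

definition groupoid_on :: "'a set \<Rightarrow> ('g, 'a) groupoid \<Rightarrow> bool" where
  "groupoid_on V G \<longleftrightarrow>
     (\<forall>v\<in>V. GId G v \<in> GMor G \<and> GSrc G (GId G v) = v \<and> GRng G (GId G v) = v)
   \<and> (\<forall>g\<in>GMor G. GSrc G g \<in> V \<and> GRng G g \<in> V
        \<and> GCmp G g (GId G (GSrc G g)) = g \<and> GCmp G (GId G (GRng G g)) g = g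
        \<and> GInv G g \<in> GMor G \<and> GSrc G (GInv G g) = GRng G g \<and> GRng G (GInv G g) = GSrc G g
        \<and> GCmp G g (GInv G g) = GId G (GRng G g) \<and> GCmp G (GInv G g) g = GId G (GSrc G g))
   \<and> (\<forall>g\<in>GMor G. \<forall>h\<in>GMor G. GSrc G g = GRng G h \<longrightarrow>
        GCmp G g h \<in> GMor G \<and> GRng G (GCmp G g h) = GRng G g \<and> GSrc G (GCmp G g h) = GSrc G h)
   \<and> (\<forall>f\<in>GMor G. \<forall>g\<in>GMor G. \<forall>h\<in>GMor G. GSrc G f = GRng G g \<longrightarrow> GSrc G g = GRng G h \<longrightarrow>
        GCmp G (GCmp G f g) h = GCmp G f (GCmp G g h))"

text \<open>Self-similar action: lact g x is g |> x, ract g x is g <| x (defined for s(g) = r(x)).\<close>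

definition self_similar_action ::
  "'a kgraph \<Rightarrow> ('g, 'a) groupoid \<Rightarrow> ('g \<Rightarrow> 'a \<Rightarrow> 'a) \<Rightarrow> ('g \<Rightarrow> 'a \<Rightarrow> 'g) \<Rightarrow> bool" where
  "self_similar_action L G lact ract \<longleftrightarrow>
     (\<forall>g\<in>GMor G. \<forall>x\<in>KMor L. GSrc G g = KRng L x \<longrightarrow>
        lact g x \<in> KMor L \<and> ract g x \<in> GMor G
        \<and> KRng L (lact g x) = GRng G g
        \<and> KDeg L (lact g x) = KDeg L x
        \<and> KSrc L (lact g x) = GRng G (ract g x)
        \<and> GSrc G (ract g x) = KSrc L x)
   \<and> (\<forall>x\<in>KMor L. lact (GId G (KRng L x)) x = x)
   \<and> (\<forall>g\<in>GMor G. \<forall>h\<in>GMor G. \<forall>x\<in>KMor L. GSrc G g = GRng G h \<longrightarrow> GSrc G h = KRng L x \<longrightarrow>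
        lact (GCmp G g h) x = lact g (lact h x)
        \<and> ract (GCmp G g h) x = GCmp G (ract g (lact h x)) (ract h x))
   \<and> (\<forall>g\<in>GMor G. \<forall>x\<in>KMor L. \<forall>y\<in>KMor L. GSrc G g = KRng L x \<longrightarrow> KSrc L x = KRng L y \<longrightarrow>
        lact g (KCmp L x y) = KCmp L (lact g x) (lact (ract g x) y)
        \<and> ract g (KCmp L x y) = ract (ract g x) y)
   \<and> (\<forall>g\<in>GMor G. ract g (GSrc G g) = g)"

text \<open>Zappa-Szep product restricted to the morphisms of L satisfying P
  (P = True gives L bowtie G; P x = (d(x)_k = 0) gives Gamma bowtie G).\<close>

definition zs_mor :: "'a kgraph \<Rightarrow> ('g, 'a) groupoid \<Rightarrow> ('a \<Rightarrow> bool) \<Rightarrow> ('a \<times> 'g) set" where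
  "zs_mor L G P = {(x, g). x \<in> KMor L \<and> P x \<and> g \<in> GMor G \<and> KSrc L x = GRng G g}"

definition zs_rng :: "'a kgraph \<Rightarrow> ('a \<times> 'g) \<Rightarrow> 'a" where
  "zs_rng L c = KRng L (fst c)"

definition zs_src :: "('g, 'a) groupoid \<Rightarrow> ('a \<times> 'g) \<Rightarrow> 'a" where
  "zs_src G c = GSrc G (snd c)"

definition zs_cmp :: "'a kgraph \<Rightarrow> ('g, 'a) groupoid \<Rightarrow> ('g \<Rightarrow> 'a \<Rightarrow> 'a) \<Rightarrow> ('g \<Rightarrow> 'a \<Rightarrow> 'g)
    \<Rightarrow> ('a \<times> 'g) \<Rightarrow> ('a \<times> 'g) \<Rightarrow> ('a \<times> 'g)" where
  "zs_cmp L G lact ract c e =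
     (KCmp L (fst c) (lact (snd c) (fst e)), GCmp G (ract (snd c) (fst e)) (snd e))"

text \<open>F \<subseteq> vC is exhaustive in C: every c in vC has a in F with cC \<inter> aC nonempty.\<close>

definition exhaustive ::
  "'c set \<Rightarrow> ('c \<Rightarrow> 'o) \<Rightarrow> ('c \<Rightarrow> 'o) \<Rightarrow> ('c \<Rightarrow> 'c \<Rightarrow> 'c) \<Rightarrow> 'o \<Rightarrow> 'c set \<Rightarrow> bool" where
  "exhaustive C rng src cmp v F \<longleftrightarrow>
     F \<subseteq> {c \<in> C. rng c = v} \<and>
     (\<forall>c\<in>C. rng c = v \<longrightarrow>
        (\<exists>a\<in>F. \<exists>x\<in>C. \<exists>y\<in>C. src c = rng x \<and> src a = rng y \<and> cmp c x = cmp a y))"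

end

theory Submission
  imports Defs
begin

context fixes n :: nat and L :: "'a kgraph" assumes K: "is_kgraph n L"
begin

lemma cat: "is_category L" using K by (simp add: is_kgraph_def)

lemma src_mor: "x \<in> KMor L \<Longrightarrow> KSrc L x \<in> KMor L" using cat by (simp add: is_category_def)
lemma rng_mor: "x \<in> KMor L \<Longrightarrow> KRng L x \<in> KMor L" using cat by (simp add: is_category_def)
lemma src_src: "x \<in> KMor L \<Longrightarrow> KSrc L (KSrc L x) = KSrc L x" using cat by (simp add: is_category_def)
lemma rng_src: "x \<in> KMor L \<Longrightarrow> KRng L (KSrc L x) = KSrc L x" using cat by (simp add: is_category_def)
lemma src_rng: "x \<in> KMor L \<Longrightarrow> KSrc L (KRng L x) = KRng L x" using cat by (simp add: is_category_def)
lemma rng_rng: "x \<in> KMor L \<Longrightarrow> KRng L (KRng L x) = KRng L x" using cat by (simp add: is_category_def)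
lemma cmp_left: "x \<in> KMor L \<Longrightarrow> KCmp L (KRng L x) x = x" using cat by (simp add: is_category_def)
lemma cmp_right: "x \<in> KMor L \<Longrightarrow> KCmp L x (KSrc L x) = x" using cat by (simp add: is_category_def)
lemma cmp_mor: "x \<in> KMor L \<Longrightarrow> y \<in> KMor L \<Longrightarrow> KSrc L x = KRng L y \<Longrightarrow> KCmp L x y \<in> KMor L"
  using cat by (simp add: is_category_def)
lemma rng_cmp: "x \<in> KMor L \<Longrightarrow> y \<in> KMor L \<Longrightarrow> KSrc L x = KRng L y \<Longrightarrow> KRng L (KCmp L x y) = KRng L x"
  using cat by (simp add: is_category_def)
lemma src_cmp: "x \<in> KMor L \<Longrightarrow> y \<in> KMor L \<Longrightarrow> KSrc L x = KRng L y \<Longrightarrow> KSrc L (KCmp L x y) = KSrc L y"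
  using cat by (simp add: is_category_def)
lemma assoc: "x \<in> KMor L \<Longrightarrow> y \<in> KMor L \<Longrightarrow> z \<in> KMor L \<Longrightarrow> KSrc L x = KRng L y \<Longrightarrow> KSrc L y = KRng L z \<Longrightarrow>
        KCmp L (KCmp L x y) z = KCmp L x (KCmp L y z)"
  using cat unfolding is_category_def by blast

lemma deg_high: "x \<in> KMor L \<Longrightarrow> i \<ge> n \<Longrightarrow> KDeg L x i = 0" using K by (simp add: is_kgraph_def)
lemma deg_cmp: "x \<in> KMor L \<Longrightarrow> y \<in> KMor L \<Longrightarrow> KSrc L x = KRng L y \<Longrightarrow>
   KDeg L (KCmp L x y) = (\<lambda>i. KDeg L x i + KDeg L y i)" using K by (simp add: is_kgraph_def)
lemma deg_src: "x \<in> KMor L \<Longrightarrow> KDeg L (KSrc L x) = (\<lambda>_. 0)"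
proof -
  assume x: "x \<in> KMor L"
  have "KSrc L x \<in> vertices L" unfolding vertices_def using rng_src[OF x] src_mor[OF x]
    by (metis image_eqI)
  thus ?thesis using K by (simp add: is_kgraph_def)
qed
lemma deg_rng: "x \<in> KMor L \<Longrightarrow> KDeg L (KRng L x) = (\<lambda>_. 0)"
proof -
  assume x: "x \<in> KMor L"
  have "KRng L x \<in> vertices L" unfolding vertices_def using x by blast
  thus ?thesis using K by (simp add: is_kgraph_def)
qed

lemma factor_ex: assumes "x \<in> KMor L" "KDeg L x = (\<lambda>i. m i + p i)"
  shows "\<exists>a b. a \<in> KMor L \<and> b \<in> KMor L \<and> KSrc L a = KRng L b \<and> KCmp L a b = x \<and> KDeg L a = m \<and> KDeg L b = p"
proof -
  from K assms have "\<exists>!q. case q of (a, b) \<Rightarrow> a \<in> KMor L \<and> b \<in> KMor L \<and> KSrc L a = KRng L b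
                 \<and> KCmp L a b = x \<and> KDeg L a = m \<and> KDeg L b = p" by (simp add: is_kgraph_def)
  then obtain q where "case q of (a, b) \<Rightarrow> a \<in> KMor L \<and> b \<in> KMor L \<and> KSrc L a = KRng L b
                 \<and> KCmp L a b = x \<and> KDeg L a = m \<and> KDeg L b = p" by blast
  thus ?thesis by (cases q) auto
qed

lemma factor_uniq: assumes "x \<in> KMor L" "KDeg L x = (\<lambda>i. m i + p i)"
  and "a \<in> KMor L" "b \<in> KMor L" "KSrc L a = KRng L b" "KCmp L a b = x" "KDeg L a = m" "KDeg L b = p"
  and "a' \<in> KMor L" "b' \<in> KMor L" "KSrc L a' = KRng L b'" "KCmp L a' b' = x" "KDeg L a' = m" "KDeg L b' = p"
  shows "a = a' \<and> b = b'"
proof -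
  from K assms(1,2) have "\<exists>!q. case q of (a, b) \<Rightarrow> a \<in> KMor L \<and> b \<in> KMor L \<and> KSrc L a = KRng L b
                 \<and> KCmp L a b = x \<and> KDeg L a = m \<and> KDeg L b = p" by (simp add: is_kgraph_def)
  hence "(a,b) = (a',b')" using assms(3-) by (metis (mono_tags, lifting) case_prod_conv)
  thus ?thesis by simp
qed

lemma deg_zero_vertex: assumes "x \<in> KMor L" "KDeg L x = (\<lambda>_. 0)" shows "KRng L x = x"
proof -
  have "KRng L x = x \<and> x = KSrc L x"
    by (rule factor_uniq[of x "\<lambda>_. 0" "\<lambda>_. 0"]) (use assms in \<open>simp_all add: rng_mor src_mor src_rng rng_src cmp_left cmp_right deg_rng deg_src\<close>)
  thus ?thesis by simp
qed

lemma edge_of_deg: assumes "\<mu> \<in> KMor L" "KDeg L \<mu> i > 0"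
  shows "\<exists>e\<in>KMor L. KRng L e = KRng L \<mu> \<and> KDeg L e = unitv i"
proof -
  have dd: "KDeg L \<mu> = (\<lambda>j. unitv i j + (KDeg L \<mu> j - unitv i j))"
    using assms(2) by (auto simp: unitv_def)
  obtain a b where "a \<in> KMor L" "b \<in> KMor L" "KSrc L a = KRng L b" "KCmp L a b = \<mu>" "KDeg L a = unitv i"
    using factor_ex[OF assms(1) dd] by blast
  thus ?thesis using rng_cmp by metis
qed

definition good :: "nat \<Rightarrow> (nat \<Rightarrow> nat) \<Rightarrow> 'a \<Rightarrow> bool" where
  "good k N p \<longleftrightarrow> (\<forall>i<k. N i \<le> KDeg L p i \<or> \<not>(\<exists>e\<in>KMor L. KRng L e = KSrc L p \<and> KDeg L e = unitv i))"

lemma extend_aux: "(\<Sum>i<k. N i - KDeg L \<pi> i) \<le> m \<Longrightarrow> \<pi> \<in> KMor L \<Longrightarrow>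
   \<exists>\<tau>\<in>KMor L. KRng L \<tau> = KSrc L \<pi> \<and> good k N (KCmp L \<pi> \<tau>)"
proof (induction m arbitrary: \<pi>)
  case (0 \<pi>)
  have "good k N \<pi>" unfolding good_def
  proof (intro allI impI)
    fix i assume "i < k"
    hence "N i - KDeg L \<pi> i \<le> (\<Sum>i<k. N i - KDeg L \<pi> i)"
      by (intro member_le_sum) auto
    thus "N i \<le> KDeg L \<pi> i \<or> \<not>(\<exists>e\<in>KMor L. KRng L e = KSrc L \<pi> \<and> KDeg L e = unitv i)" using 0 by simp
  qed
  thus ?case using 0 by (intro bexI[of _ "KSrc L \<pi>"]) (auto simp: cmp_right src_mor rng_src)
next
  case (Suc m \<pi>)
  show ?case
  proof (cases "good k N \<pi>")
    case True
    thus ?thesis using Suc by (intro bexI[of _ "KSrc L \<pi>"]) (auto simp: cmp_right src_mor rng_src)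
  next
    case False
    then obtain i e where i: "i < k" "KDeg L \<pi> i < N i" and e: "e \<in> KMor L" "KRng L e = KSrc L \<pi>" "KDeg L e = unitv i"
      unfolding good_def by force
    define \<pi>' where "\<pi>' = KCmp L \<pi> e"
    have p': "\<pi>' \<in> KMor L" unfolding \<pi>'_def using Suc.prems e by (simp add: cmp_mor)
    have dp': "KDeg L \<pi>' = (\<lambda>j. KDeg L \<pi> j + unitv i j)" unfolding \<pi>'_def using Suc.prems e by (simp add: deg_cmp)
    have "(\<Sum>j<k. N j - KDeg L \<pi>' j) < (\<Sum>j<k. N j - KDeg L \<pi> j)"
      by (rule sum_strict_mono_ex1) (use i in \<open>auto simp: dp' unitv_def\<close>)
    hence "(\<Sum>j<k. N j - KDeg L \<pi>' j) \<le> m" using Suc.prems by simp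
    from Suc.IH[OF this p'] obtain \<tau>' where t: "\<tau>' \<in> KMor L" "KRng L \<tau>' = KSrc L \<pi>'" "good k N (KCmp L \<pi>' \<tau>')" by blast
    have sp': "KSrc L \<pi>' = KSrc L e" unfolding \<pi>'_def using Suc.prems e by (simp add: src_cmp)
    show ?thesis
    proof (rule bexI[of _ "KCmp L e \<tau>'"])
      show "KCmp L e \<tau>' \<in> KMor L" using t e sp' by (simp add: cmp_mor)
      have "KCmp L \<pi> (KCmp L e \<tau>') = KCmp L \<pi>' \<tau>'" unfolding \<pi>'_def
        using Suc.prems e t sp' by (simp add: assoc)
      moreover have "KRng L (KCmp L e \<tau>') = KSrc L \<pi>" using t e sp' by (simp add: rng_cmp)
      ultimately show "KRng L (KCmp L e \<tau>') = KSrc L \<pi> \<and> good k N (KCmp L \<pi> (KCmp L e \<tau>'))" using t by simp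
    qed
  qed
qed

lemma extend: "\<pi> \<in> KMor L \<Longrightarrow> \<exists>\<tau>\<in>KMor L. KRng L \<tau> = KSrc L \<pi> \<and> good k N (KCmp L \<pi> \<tau>)"
  by (rule extend_aux) auto

lemma lc_back: assumes LC: "locally_convex n L" and kn: "k < n" and il: "i < n" "i \<noteq> k"
  shows "\<rho> \<in> KMor L \<Longrightarrow> KDeg L \<rho> = (\<lambda>j. if j = k then t else 0) \<Longrightarrow>
    \<not>(\<exists>e\<in>KMor L. KRng L e = KSrc L \<rho> \<and> KDeg L e = unitv i) \<Longrightarrow>
    \<not>(\<exists>e\<in>KMor L. KRng L e = KRng L \<rho> \<and> KDeg L e = unitv i)"
proof (induction t arbitrary: \<rho>)
  case 0
  hence "KRng L \<rho> = \<rho>" using deg_zero_vertex by (simp add: fun_eq_iff)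
  moreover have "KSrc L \<rho> = \<rho>" using 0 calculation by (metis src_rng)
  ultimately show ?case using 0 by simp
next
  case (Suc t \<rho>)
  have dd: "KDeg L \<rho> = (\<lambda>j. unitv k j + (\<lambda>j. if j = k then t else 0) j)"
    using Suc.prems by (auto simp: unitv_def)
  obtain a b where ab: "a \<in> KMor L" "b \<in> KMor L" "KSrc L a = KRng L b" "KCmp L a b = \<rho>"
    "KDeg L a = unitv k" "KDeg L b = (\<lambda>j. if j = k then t else 0)"
    using factor_ex[of \<rho> "unitv k" "\<lambda>j. if j = k then t else 0", OF Suc.prems(1) dd] by blast
  have "KSrc L b = KSrc L \<rho>" using ab by (metis src_cmp)
  hence "\<not>(\<exists>e\<in>KMor L. KRng L e = KRng L b \<and> KDeg L e = unitv i)"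
    using Suc.IH[OF ab(2) ab(6)] Suc.prems(3) by simp
  hence "\<not>(\<exists>e\<in>KMor L. KRng L e = KSrc L a \<and> KDeg L e = unitv i)" using ab(3) by simp
  hence "\<not>(\<exists>e\<in>KMor L. KRng L e = KRng L a \<and> KDeg L e = unitv i)"
    using LC kn il ab(1,5) unfolding locally_convex_def by metis
  moreover have "KRng L \<rho> = KRng L a" using ab by (metis rng_cmp)
  ultimately show ?case by simp
qed

lemma src_vert: "x \<in> KMor L \<Longrightarrow> KSrc L x \<in> vertices L"
  unfolding vertices_def using rng_src src_mor by (metis image_eqI)
lemma rng_vert: "x \<in> KMor L \<Longrightarrow> KRng L x \<in> vertices L"
  unfolding vertices_def by blast

end

lemma gpd:
  assumes "groupoid_on V G"
  shows "v \<in> V \<Longrightarrow> GId G v \<in> GMor G" "v \<in> V \<Longrightarrow> GSrc G (GId G v) = v" "v \<in> V \<Longrightarrow> GRng G (GId G v) = v"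
  and "g \<in> GMor G \<Longrightarrow> GInv G g \<in> GMor G" "g \<in> GMor G \<Longrightarrow> GSrc G (GInv G g) = GRng G g"
   "g \<in> GMor G \<Longrightarrow> GRng G (GInv G g) = GSrc G g"
   "g \<in> GMor G \<Longrightarrow> GCmp G g (GInv G g) = GId G (GRng G g)"
   "g \<in> GMor G \<Longrightarrow> GCmp G (GId G (GRng G g)) g = g"
   "g \<in> GMor G \<Longrightarrow> GSrc G g \<in> V" "g \<in> GMor G \<Longrightarrow> GRng G g \<in> V"
  and "g \<in> GMor G \<Longrightarrow> h \<in> GMor G \<Longrightarrow> GSrc G g = GRng G h \<Longrightarrow> GCmp G g h \<in> GMor G"
      "g \<in> GMor G \<Longrightarrow> h \<in> GMor G \<Longrightarrow> GSrc G g = GRng G h \<Longrightarrow> GRng G (GCmp G g h) = GRng G g"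
      "g \<in> GMor G \<Longrightarrow> h \<in> GMor G \<Longrightarrow> GSrc G g = GRng G h \<Longrightarrow> GSrc G (GCmp G g h) = GSrc G h"
  and "f \<in> GMor G \<Longrightarrow> g \<in> GMor G \<Longrightarrow> h \<in> GMor G \<Longrightarrow> GSrc G f = GRng G g \<Longrightarrow> GSrc G g = GRng G h \<Longrightarrow>
        GCmp G (GCmp G f g) h = GCmp G f (GCmp G g h)"
  using assms unfolding groupoid_on_def by blast+

lemma ssa:
  assumes "self_similar_action L G lact ract"
  shows "g \<in> GMor G \<Longrightarrow> x \<in> KMor L \<Longrightarrow> GSrc G g = KRng L x \<Longrightarrow>
        lact g x \<in> KMor L \<and> ract g x \<in> GMor G
        \<and> KRng L (lact g x) = GRng G g
        \<and> KDeg L (lact g x) = KDeg L x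
        \<and> KSrc L (lact g x) = GRng G (ract g x)
        \<and> GSrc G (ract g x) = KSrc L x"
  and "x \<in> KMor L \<Longrightarrow> lact (GId G (KRng L x)) x = x"
  and "g \<in> GMor G \<Longrightarrow> h \<in> GMor G \<Longrightarrow> x \<in> KMor L \<Longrightarrow> GSrc G g = GRng G h \<Longrightarrow> GSrc G h = KRng L x \<Longrightarrow>
        lact (GCmp G g h) x = lact g (lact h x)"
  using assms unfolding self_similar_action_def by blast+

theorem lemma3p18:
  fixes k :: nat and L :: "'a kgraph" and G :: "('g, 'a) groupoid"
    and lact :: "'g \<Rightarrow> 'a \<Rightarrow> 'a" and ract :: "'g \<Rightarrow> 'a \<Rightarrow> 'g"
    and v :: 'a and F :: "('a \<times> 'g) set"
  assumes "is_kgraph (Suc k) L"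
    and "locally_convex (Suc k) L"
    and "groupoid_on (vertices L) G"
    and "self_similar_action L G lact ract"
    and "v \<in> vertices L"
    and "finite F"
    and "F \<subseteq> {c \<in> zs_mor L G (\<lambda>x. KDeg L x k = 0). zs_rng L c = v}"
    and "exhaustive (zs_mor L G (\<lambda>x. KDeg L x k = 0)) (zs_rng L) (zs_src G)
           (zs_cmp L G lact ract) v F"
  shows "exhaustive (zs_mor L G (\<lambda>_. True)) (zs_rng L) (zs_src G)
           (zs_cmp L G lact ract) v F"
proof -
  note K = assms(1)
  note Gp = gpd[OF assms(3)]
  note S = ssa[OF assms(4)]
  have sub: "F \<subseteq> {c \<in> zs_mor L G (\<lambda>_. True). zs_rng L c = v}"
    using assms(7) unfolding zs_mor_def by auto
  define N where "N = (\<lambda>i. \<Sum>a\<in>F. KDeg L (fst a) i)"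
  have "\<exists>a\<in>F. \<exists>x\<in>zs_mor L G (\<lambda>_. True). \<exists>y\<in>zs_mor L G (\<lambda>_. True).
          zs_src G c = zs_rng L x \<and> zs_src G a = zs_rng L y \<and> zs_cmp L G lact ract c x = zs_cmp L G lact ract a y"
    if cC: "c \<in> zs_mor L G (\<lambda>_. True)" and cv: "zs_rng L c = v" for c
  proof -
    obtain lam g where c: "c = (lam, g)" and lam: "lam \<in> KMor L" and g: "g \<in> GMor G" and slam: "KSrc L lam = GRng G g"
      using cC unfolding zs_mor_def by auto
    have rlam: "KRng L lam = v" using cv c by (simp add: zs_rng_def)
    obtain \<tau> where tau: "\<tau> \<in> KMor L" "KRng L \<tau> = KSrc L lam" and gd: "good L k N (KCmp L lam \<tau>)"
      using extend[OF K lam] by blast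
    define \<tau>0 where "\<tau>0 = lact (GInv G g) \<tau>"
    have t0: "\<tau>0 \<in> KMor L" "KRng L \<tau>0 = GSrc G g" "ract (GInv G g) \<tau> \<in> GMor G"
      using S(1)[of "GInv G g" \<tau>] Gp(4,5,6)[OF g] tau slam unfolding \<tau>0_def by auto
    have lt0: "lact g \<tau>0 = \<tau>"
    proof -
      have "lact g \<tau>0 = lact (GCmp G g (GInv G g)) \<tau>" unfolding \<tau>0_def
        using S(3)[of g "GInv G g" \<tau>] g Gp(4,5,6)[OF g] tau slam by simp
      also have "\<dots> = \<tau>" using Gp(7)[OF g] S(2)[OF tau(1)] tau slam by simp
      finally show ?thesis .
    qed
    have gt0: "ract g \<tau>0 \<in> GMor G" "GSrc G (ract g \<tau>0) = KSrc L \<tau>0" "GRng G (ract g \<tau>0) = KSrc L \<tau>"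
      using S(1)[OF g t0(1)] t0 lt0 by auto
    define x where "x = (\<tau>0, GId G (KSrc L \<tau>0))"
    have sv: "KSrc L \<tau>0 \<in> vertices L" using src_vert[OF K t0(1)] .
    have xC: "x \<in> zs_mor L G (\<lambda>_. True)" unfolding x_def zs_mor_def using t0 Gp(1,3)[OF sv] by auto
    define g' where "g' = GCmp G (ract g \<tau>0) (GId G (KSrc L \<tau>0))"
    have g': "g' \<in> GMor G" "GRng G g' = KSrc L \<tau>" unfolding g'_def
      using gt0 Gp(1,3)[OF sv] Gp(11,12) by auto
    have cx: "zs_cmp L G lact ract c x = (KCmp L lam \<tau>, g')"
      unfolding zs_cmp_def c x_def g'_def using lt0 by simp
    define lt where "lt = KCmp L lam \<tau>"
    have lt: "lt \<in> KMor L" "KRng L lt = v" "KSrc L lt = KSrc L \<tau>"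
      unfolding lt_def using tau lam rlam by (auto simp: cmp_mor[OF K] rng_cmp[OF K] src_cmp[OF K])
    define D where "D = KDeg L lt"
    have dd: "KDeg L lt = (\<lambda>i. (\<lambda>i. if i = k then 0 else D i) i + (\<lambda>i. if i = k then D i else 0) i)"
      unfolding D_def by auto
    obtain \<beta> \<rho> where br: "\<beta> \<in> KMor L" "\<rho> \<in> KMor L" "KSrc L \<beta> = KRng L \<rho>" "KCmp L \<beta> \<rho> = lt"
      "KDeg L \<beta> = (\<lambda>i. if i = k then 0 else D i)" "KDeg L \<rho> = (\<lambda>i. if i = k then D i else 0)"
      using factor_ex[OF K lt(1) dd] by blast
    have rb: "KRng L \<beta> = v" using br lt by (metis rng_cmp[OF K])
    have sr: "KSrc L \<rho> = KSrc L lt" using br by (metis src_cmp[OF K])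
    have goodb: "N i \<le> KDeg L \<beta> i \<or> \<not>(\<exists>e\<in>KMor L. KRng L e = KSrc L \<beta> \<and> KDeg L e = unitv i)" if "i < k" for i
    proof -
      have "N i \<le> D i \<or> \<not>(\<exists>e\<in>KMor L. KRng L e = KSrc L lt \<and> KDeg L e = unitv i)"
        using gd that unfolding good_def[OF K] D_def lt_def by blast
      moreover have "\<not>(\<exists>e\<in>KMor L. KRng L e = KSrc L lt \<and> KDeg L e = unitv i) \<Longrightarrow>
                \<not>(\<exists>e\<in>KMor L. KRng L e = KRng L \<rho> \<and> KDeg L e = unitv i)"
      proof -
        have "KDeg L \<rho> = (\<lambda>j. if j = k then D k else 0)" using br(6) by (auto simp: fun_eq_iff)
        thus "\<not>(\<exists>e\<in>KMor L. KRng L e = KSrc L lt \<and> KDeg L e = unitv i) \<Longrightarrow>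
                \<not>(\<exists>e\<in>KMor L. KRng L e = KRng L \<rho> \<and> KDeg L e = unitv i)"
          using lc_back[OF K assms(2), of k i \<rho> "D k"] br(2) sr that by (metis Suc_lessD less_SucI less_irrefl_nat lessI)
      qed
      ultimately show ?thesis using br(3,5) that by auto
    qed
    define cb where "cb = (\<beta>, GId G (KSrc L \<beta>))"
    have svb: "KSrc L \<beta> \<in> vertices L" using src_vert[OF K br(1)] .
    have cbC: "cb \<in> zs_mor L G (\<lambda>x. KDeg L x k = 0)" "zs_rng L cb = v"
      unfolding cb_def zs_mor_def zs_rng_def using br Gp(1,3)[OF svb] rb by auto
    then obtain a x' y' where aF: "a \<in> F" and x'C: "x' \<in> zs_mor L G (\<lambda>x. KDeg L x k = 0)"
      and y'C: "y' \<in> zs_mor L G (\<lambda>x. KDeg L x k = 0)" and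
      eqs: "zs_src G cb = zs_rng L x'" "zs_src G a = zs_rng L y'" "zs_cmp L G lact ract cb x' = zs_cmp L G lact ract a y'"
      using assms(8) unfolding exhaustive_def by blast
    obtain \<mu> h1 where x': "x' = (\<mu>, h1)" "\<mu> \<in> KMor L" "KDeg L \<mu> k = 0" "KRng L \<mu> = KSrc L \<beta>"
      using x'C eqs(1) Gp(2)[OF svb] unfolding zs_mor_def zs_src_def zs_rng_def cb_def by auto
    obtain \<alpha> ga where a: "a = (\<alpha>, ga)" "\<alpha> \<in> KMor L" "KDeg L \<alpha> k = 0" "ga \<in> GMor G" "KSrc L \<alpha> = GRng G ga"
      using aF assms(7) unfolding zs_mor_def by auto
    obtain \<nu> h2 where y': "y' = (\<nu>, h2)" "\<nu> \<in> KMor L" "GSrc G ga = KRng L \<nu>"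
      using y'C eqs(2) a unfolding zs_mor_def zs_src_def zs_rng_def by auto
    define \<nu>' where "\<nu>' = lact ga \<nu>"
    have nu': "\<nu>' \<in> KMor L" "KRng L \<nu>' = KSrc L \<alpha>" "KDeg L \<nu>' = KDeg L \<nu>"
      using S(1)[OF a(4) y'(2) y'(3)] a unfolding \<nu>'_def by auto
    have eq: "KCmp L \<beta> \<mu> = KCmp L \<alpha> \<nu>'"
      using eqs(3) S(2)[OF x'(2)] x'(4) unfolding cb_def x' a y' zs_cmp_def \<nu>'_def by simp
    have deq: "KDeg L \<beta> i + KDeg L \<mu> i = KDeg L \<alpha> i + KDeg L \<nu>' i" for i
    proof -
      have "KDeg L (KCmp L \<beta> \<mu>) = KDeg L (KCmp L \<alpha> \<nu>')" using eq by simp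
      hence "KDeg L (KCmp L \<beta> \<mu>) i = KDeg L (KCmp L \<alpha> \<nu>') i" by simp
      thus ?thesis by (simp add: deg_cmp[OF K br(1) x'(2) x'(4)[symmetric]] deg_cmp[OF K a(2) nu'(1) nu'(2)[symmetric]])
    qed
    have ale: "KDeg L \<alpha> i \<le> KDeg L \<beta> i" for i
    proof -
      consider "i < k" | "i = k" | "i > k" by linarith
      thus ?thesis
      proof cases
        case 1
        show ?thesis
        proof (cases "N i \<le> KDeg L \<beta> i")
          case True
          have "KDeg L \<alpha> i \<le> N i" unfolding N_def using member_le_sum[OF aF, of "\<lambda>a. KDeg L (fst a) i"] assms(6) a by simp
          thus ?thesis using True by simp
        next
          case False
          hence "\<not>(\<exists>e\<in>KMor L. KRng L e = KSrc L \<beta> \<and> KDeg L e = unitv i)" using goodb 1 by blast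
          hence "KDeg L \<mu> i = 0" using edge_of_deg[OF K x'(2), of i] x'(4) by auto
          thus ?thesis using deq[of i] by simp
        qed
      next
        case 2 thus ?thesis using a(3) by simp
      next
        case 3 thus ?thesis using deg_high[OF K a(2), of i] by simp
      qed
    qed
    define \<delta> where "\<delta> = (\<lambda>i. KDeg L \<beta> i - KDeg L \<alpha> i)"
    have dnu: "KDeg L \<nu>' = (\<lambda>i. \<delta> i + (KDeg L \<nu>' i - \<delta> i))"
    proof -
      have "\<delta> i \<le> KDeg L \<nu>' i" for i using deq[of i] unfolding \<delta>_def by arith
      thus ?thesis by (auto simp: fun_eq_iff)
    qed
    obtain \<nu>1 \<nu>2 where n12: "\<nu>1 \<in> KMor L" "\<nu>2 \<in> KMor L" "KSrc L \<nu>1 = KRng L \<nu>2" "KCmp L \<nu>1 \<nu>2 = \<nu>'"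
      "KDeg L \<nu>1 = \<delta>" "KDeg L \<nu>2 = (\<lambda>i. KDeg L \<nu>' i - \<delta> i)"
      using factor_ex[OF K nu'(1) dnu] by blast
    have dn2: "KDeg L \<nu>2 = KDeg L \<mu>"
    proof -
      have "KDeg L \<nu>' i - \<delta> i = KDeg L \<mu> i" for i using deq[of i] ale[of i] unfolding \<delta>_def by arith
      thus ?thesis using n12(6) by (auto simp: fun_eq_iff)
    qed
    have rn1: "KRng L \<nu>1 = KSrc L \<alpha>" using n12 nu' by (metis rng_cmp[OF K])
    have an1: "KCmp L \<alpha> \<nu>1 \<in> KMor L" "KSrc L (KCmp L \<alpha> \<nu>1) = KRng L \<nu>2"
      "KDeg L (KCmp L \<alpha> \<nu>1) = KDeg L \<beta>"
      using a(2) n12 rn1 ale by (auto simp: cmp_mor[OF K] src_cmp[OF K] deg_cmp[OF K] \<delta>_def fun_eq_iff)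
    have bmu: "KCmp L \<beta> \<mu> \<in> KMor L" using br(1) x' by (simp add: cmp_mor[OF K])
    have e2: "KCmp L (KCmp L \<alpha> \<nu>1) \<nu>2 = KCmp L \<beta> \<mu>"
      using eq n12 a(2) rn1 by (simp add: assoc[OF K])
    have "\<beta> = KCmp L \<alpha> \<nu>1 \<and> \<mu> = \<nu>2"
      by (rule factor_uniq[OF K bmu, of "KDeg L \<beta>" "KDeg L \<mu>"])
         (use br(1) x' an1 n12 e2 dn2 in \<open>simp_all add: deg_cmp[OF K]\<close>)
    hence bdec: "\<beta> = KCmp L \<alpha> \<nu>1" by simp
    have sn1: "KSrc L \<nu>1 = KRng L \<rho>" using br(3) bdec a(2) n12(1) rn1 by (simp add: src_cmp[OF K])
    define w where "w = KCmp L \<nu>1 \<rho>"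
    have w: "w \<in> KMor L" "KRng L w = GSrc G (GInv G ga)" "KSrc L w = KSrc L \<tau>"
      unfolding w_def using n12(1) br(2) sn1 rn1 Gp(5)[OF a(4)] a(5) sr lt(3)
      by (auto simp: cmp_mor[OF K] rng_cmp[OF K] src_cmp[OF K])
    have ltw: "lt = KCmp L \<alpha> w" unfolding w_def using br(4) bdec a(2) n12(1) br(2) rn1 sn1
      by (simp add: assoc[OF K])
    define \<eta> where "\<eta> = lact (GInv G ga) w"
    have eta: "\<eta> \<in> KMor L" "KRng L \<eta> = GSrc G ga"
      using S(1)[OF Gp(4)[OF a(4)] w(1) w(2)[symmetric]] Gp(6)[OF a(4)] unfolding \<eta>_def by auto
    have leta: "lact ga \<eta> = w"
    proof -
      have "lact ga \<eta> = lact (GCmp G ga (GInv G ga)) w" unfolding \<eta>_def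
        using S(3)[of ga "GInv G ga" w] a(4) Gp(4,5,6)[OF a(4)] w by simp
      also have "\<dots> = w" using Gp(7)[OF a(4)] S(2)[OF w(1)] w Gp(5)[OF a(4)] by simp
      finally show ?thesis .
    qed
    define r where "r = ract ga \<eta>"
    have r: "r \<in> GMor G" "GSrc G r = KSrc L \<eta>" "GRng G r = KSrc L \<tau>"
      using S(1)[OF a(4) eta(1)] eta(2) leta w(3) unfolding r_def by auto
    define hy where "hy = GCmp G (GInv G r) g'"
    have hy: "hy \<in> GMor G" "GRng G hy = KSrc L \<eta>" "GCmp G r hy = g'"
    proof -
      show "hy \<in> GMor G" unfolding hy_def using Gp(4,5)[OF r(1)] g' r Gp(11) by auto
      show "GRng G hy = KSrc L \<eta>" unfolding hy_def using Gp(4,5,6)[OF r(1)] g' r Gp(12) by auto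
      have "GCmp G r hy = GCmp G (GCmp G r (GInv G r)) g'" unfolding hy_def
        using Gp(14)[of r "GInv G r" g'] Gp(4,5,6)[OF r(1)] g' r by auto
      also have "\<dots> = g'" using Gp(7)[OF r(1)] Gp(8)[OF g'(1)] g' r by simp
      finally show "GCmp G r hy = g'" .
    qed
    define y where "y = (\<eta>, hy)"
    have yC: "y \<in> zs_mor L G (\<lambda>_. True)" unfolding y_def zs_mor_def using eta hy by auto
    have ay: "zs_cmp L G lact ract a y = (lt, g')"
      unfolding zs_cmp_def a y_def using leta ltw hy(3) r_def by simp
    show ?thesis
    proof (intro bexI conjI)
      show "zs_src G c = zs_rng L x" unfolding c x_def zs_src_def zs_rng_def using t0 by simp
      show "zs_src G a = zs_rng L y" unfolding a y_def zs_src_def zs_rng_def using eta by simp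
      show "zs_cmp L G lact ract c x = zs_cmp L G lact ract a y" using cx ay lt_def by simp
    qed (use aF xC yC in auto)
  qed
  thus ?thesis unfolding exhaustive_def using sub by blast
qed

end
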